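(* Let $n \geq 1$, $z \geq 2$, $\epsilon > 0$, and let $\mathbf{f}_1^{(0)}, \dots, \mathbf{f}_n^{(0)}$ be probability vectors in $\mathbb{R}^z$. For $t \geq 1$ define recursively $$p_{i,j}^{(t)} = \frac{\alpha_i^{(t)}}{\epsilon + D\left(\mathbf{f}_i^{(t-1)}, \mathbf{f}_j^{(t-1)}\right)}, \qquad \mathbf{f}_i^{(t)} = \sum_{j=1}^n p_{i,j}^{(t)} \mathbf{f}_j^{(t-1)},$$ where $\alpha_i^{(t)} > 0$ normalizes so that $\sum_{j} p_{i,j}^{(t)} = 1$ and $D(\mathbf{u}, \mathbf{v}) = \sqrt{\frac{1}{z}\sum_{k=1}^{z} (u_k - v_k)^2}$. Let $R$ be the quadratic scoring rule $R(\mathbf{g}, e) = 2g_e - \sum_{k=1}^z g_k^2$ for a probability vector $\mathbf{g} \in \mathbb{R}^z$ and outcome index $e \in \{1,\dots,z\}$. Then $R$ is effective with respect to the set of weights $\{p_{i,j}^{(t)} : 1 \le i,j \le n\}$ at every time $t \geq 1$; that is, for every $t \ge 1$ and all $i, j, k \in \{1,\dots,n\}$, $$p_{i,j}^{(t)} < p_{i,k}^{(t)} \iff \mathbb{E}_{\mathbf{f}_i^{(t-1)}}\left[R\left(\mathbf{f}_k^{(t-1)}\right)\right] > \mathbb{E}_{\mathbf{f}_i^{(t-1)}}\left[R\left(\mathbf{f}_j^{(t-1)}\right)\right].$$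
   Context: For probability vectors $\mathbf{f}, \mathbf{g} \in \mathbb{R}^z$, the $\mathbf{f}$-expected score of reporting $\mathbf{g}$ is $\mathbb{E}_{\mathbf{f}}[R(\mathbf{g})] = \sum_{e=1}^z f_e\, R(\mathbf{g}, e)$. *)

theory Defs
  imports "HOL-Analysis.Analysis"
begin

text \<open>Probability vectors in R^z are represented as functions nat => real,
  with coordinates indexed by {0..<z}. Agents are indexed by {0..<n}.\<close>

definition prob_vec :: "nat \<Rightarrow> (nat \<Rightarrow> real) \<Rightarrow> bool" where
  "prob_vec z g \<longleftrightarrow> (\<forall>k<z. g k \<ge> 0) \<and> (\<Sum>k<z. g k) = 1"

definition dist_D :: "nat \<Rightarrow> (nat \<Rightarrow> real) \<Rightarrow> (nat \<Rightarrow> real) \<Rightarrow> real" where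
  "dist_D z u v = sqrt ((1 / real z) * (\<Sum>k<z. (u k - v k)^2))"

definition quad_score :: "nat \<Rightarrow> (nat \<Rightarrow> real) \<Rightarrow> nat \<Rightarrow> real" where
  "quad_score z g e = 2 * g e - (\<Sum>k<z. (g k)^2)"

definition exp_score :: "nat \<Rightarrow> (nat \<Rightarrow> (nat \<Rightarrow> real) \<Rightarrow> nat \<Rightarrow> real)
    \<Rightarrow> (nat \<Rightarrow> real) \<Rightarrow> (nat \<Rightarrow> real) \<Rightarrow> real" where
  "exp_score z R f g = (\<Sum>e<z. f e * R z g e)"

definition alpha_w :: "nat \<Rightarrow> nat \<Rightarrow> real \<Rightarrow> (nat \<Rightarrow> nat \<Rightarrow> real) \<Rightarrow> nat \<Rightarrow> real" where
  "alpha_w n z eps F i = 1 / (\<Sum>j<n. 1 / (eps + dist_D z (F i) (F j)))"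

definition weight_p :: "nat \<Rightarrow> nat \<Rightarrow> real \<Rightarrow> (nat \<Rightarrow> nat \<Rightarrow> real) \<Rightarrow> nat \<Rightarrow> nat \<Rightarrow> real" where
  "weight_p n z eps F i j = alpha_w n z eps F i / (eps + dist_D z (F i) (F j))"

fun opinions :: "nat \<Rightarrow> nat \<Rightarrow> real \<Rightarrow> (nat \<Rightarrow> nat \<Rightarrow> real) \<Rightarrow> nat \<Rightarrow> nat \<Rightarrow> nat \<Rightarrow> real" where
  "opinions n z eps f0 0 = f0"
| "opinions n z eps f0 (Suc t) = (\<lambda>i k. \<Sum>j<n.
      weight_p n z eps (opinions n z eps f0 t) i j * opinions n z eps f0 t j k)"

definition p_weight :: "nat \<Rightarrow> nat \<Rightarrow> real \<Rightarrow> (nat \<Rightarrow> nat \<Rightarrow> real) \<Rightarrow> nat \<Rightarrow> nat \<Rightarrow> nat \<Rightarrow> real" where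
  "p_weight n z eps f0 t i j = weight_p n z eps (opinions n z eps f0 (t - 1)) i j"

end

theory Submission
  imports Defs
begin

lemma dist_nonneg: "dist_D z u v \<ge> 0"
  unfolding dist_D_def by (simp add: sum_nonneg)

lemma alpha_pos:
  assumes "n \<ge> 1" "eps > 0"
  shows "alpha_w n z eps F i > 0"
proof -
  have "(\<Sum>j<n. 1 / (eps + dist_D z (F i) (F j))) > 0"
    using assms by (intro sum_pos) (auto intro!: add_pos_nonneg dist_nonneg simp: lessThan_empty_iff)
  thus ?thesis unfolding alpha_w_def by simp
qed

lemma weight_sum:
  assumes "n \<ge> 1" "eps > 0"
  shows "(\<Sum>j<n. weight_p n z eps F i j) = 1"
proof -
  have pos: "(\<Sum>j<n. 1 / (eps + dist_D z (F i) (F j))) > 0"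
    using assms by (intro sum_pos) (auto intro!: add_pos_nonneg dist_nonneg simp: lessThan_empty_iff)
  have "(\<Sum>j<n. weight_p n z eps F i j) = alpha_w n z eps F i * (\<Sum>j<n. 1 / (eps + dist_D z (F i) (F j)))"
    unfolding weight_p_def sum_distrib_left by (simp add: divide_inverse)
  thus ?thesis using pos unfolding alpha_w_def by simp
qed

lemma opinions_sum:
  assumes "n \<ge> 1" "eps > 0" "\<forall>i<n. prob_vec z (f0 i)"
  shows "\<forall>i<n. (\<Sum>k<z. opinions n z eps f0 t i k) = 1"
proof (induction t)
  case 0
  then show ?case using assms(3) by (simp add: prob_vec_def)
next
  case (Suc t)
  show ?case
  proof (intro allI impI)
    fix i assume "i < n"
    have "(\<Sum>k<z. opinions n z eps f0 (Suc t) i k)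
       = (\<Sum>j<n. weight_p n z eps (opinions n z eps f0 t) i j * (\<Sum>k<z. opinions n z eps f0 t j k))"
      by (simp add: sum.swap[of _ "{..<z}"] sum_distrib_left)
    also have "\<dots> = (\<Sum>j<n. weight_p n z eps (opinions n z eps f0 t) i j)"
      using Suc by simp
    also have "\<dots> = 1" using weight_sum assms by blast
    finally show "(\<Sum>k<z. opinions n z eps f0 (Suc t) i k) = 1" .
  qed
qed

lemma exp_score_eq:
  assumes "(\<Sum>k<z. f k) = 1"
  shows "exp_score z quad_score f g = (\<Sum>k<z. (f k)^2) - (\<Sum>k<z. (f k - g k)^2)"
proof -
  have "exp_score z quad_score f g = (\<Sum>e<z. 2 * (f e * g e)) - (\<Sum>e<z. f e) * (\<Sum>k<z. (g k)^2)"
    unfolding exp_score_def quad_score_def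
    by (simp add: algebra_simps sum_subtractf sum_distrib_left sum_distrib_right) (rule sum.swap)
  also have "\<dots> = (\<Sum>k<z. (f k)^2) - (\<Sum>k<z. (f k - g k)^2)"
    using assms by (simp add: power2_diff sum_subtractf sum.distrib sum_distrib_left algebra_simps)
  finally show ?thesis .
qed

lemma weight_less_iff:
  assumes "n \<ge> 1" "eps > 0" "z > 0"
  shows "weight_p n z eps F i j < weight_p n z eps F i k \<longleftrightarrow>
    (\<Sum>m<z. (F i m - F k m)^2) < (\<Sum>m<z. (F i m - F j m)^2)"
proof -
  have a: "alpha_w n z eps F i > 0" using alpha_pos assms by blast
  have dj: "dist_D z (F i) (F j) \<ge> 0" "dist_D z (F i) (F k) \<ge> 0" by (rule dist_nonneg)+
  have "weight_p n z eps F i j < weight_p n z eps F i k \<longleftrightarrow>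
        dist_D z (F i) (F k) < dist_D z (F i) (F j)"
    unfolding weight_p_def using a dj assms(2)
    by (simp add: divide_less_cancel frac_less2 field_simps)
  also have "\<dots> \<longleftrightarrow> (\<Sum>m<z. (F i m - F k m)^2) < (\<Sum>m<z. (F i m - F j m)^2)"
    unfolding dist_D_def using assms(3) by (simp add: divide_less_cancel)
  finally show ?thesis .
qed

theorem proposition3:
  fixes n z :: nat and eps :: real and f0 :: "nat \<Rightarrow> nat \<Rightarrow> real"
  assumes "n \<ge> 1" and "z \<ge> 2" and "eps > 0"
    and "\<forall>i<n. prob_vec z (f0 i)"
  shows "\<forall>t\<ge>1. \<forall>i<n. \<forall>j<n. \<forall>k<n.
    (p_weight n z eps f0 t i j < p_weight n z eps f0 t i k \<longleftrightarrow>
     exp_score z quad_score (opinions n z eps f0 (t - 1) i) (opinions n z eps f0 (t - 1) k)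
       > exp_score z quad_score (opinions n z eps f0 (t - 1) i) (opinions n z eps f0 (t - 1) j))"
proof (intro allI impI)
  fix t :: nat and i j k assume "t \<ge> 1" and i: "i < n" and "j < n" "k < n"
  let ?F = "opinions n z eps f0 (t - 1)"
  have s: "(\<Sum>m<z. ?F i m) = 1" using opinions_sum[OF assms(1,3,4)] i by blast
  show "p_weight n z eps f0 t i j < p_weight n z eps f0 t i k \<longleftrightarrow>
     exp_score z quad_score (?F i) (?F k) > exp_score z quad_score (?F i) (?F j)"
    unfolding p_weight_def exp_score_eq[OF s]
    using weight_less_iff[of n eps z ?F i j k] assms by auto
qed

end
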